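(* Let $\eta\colon\mathcal F\to\mathcal G$ be an exact functor between exact categories satisfying ($*'$), (i$'$) and (ii$'$). Then for any $X\in\mathcal F$ and any admissible epimorphism $T\to\eta(X)$ in $\mathcal G$ there exist an admissible epimorphism $Z\to X$ in $\mathcal F$ and an admissible epimorphism $\eta(Z)\to T$ in $\mathcal G$ such that the composition $\eta(Z)\to T\to\eta(X)$ equals $\eta(Z\to X)$. Moreover, if $\eta$ reflects admissible epimorphisms and satisfies ($*'$) and (ii$'$), then $\eta$ satisfies (i$'$).
   Context: Exact categories in Quillen's sense. Conditions for an exact functor $\eta\colon\mathcal F\to\mathcal G$: (i$'$) for any $X\in\mathcal F$ and any admissible epimorphism $T\to\eta(X)$ there exist an admissible epimorphism $Z\to X$ in $\mathcal F$ and a morphism $\eta(Z)\to T$ in $\mathcal G$ such that $\eta(Z)\to T\to\eta(X)$ equals $\eta(Z\to X)$; (ii$'$) for any $X,Y\in\mathcal F$ and any morphism $g\colon\eta(X)\to\eta(Y)$ there exist an admissible epimorphism $p\colon X'\to X$ and a morphism $h\colon X'\to Y$ in $\mathcal F$ with $g\circ\eta(p)=\eta(h)$; ($*'$) for any $T\in\mathcal G$ there exist $U\in\mathcal F$ and an admissible epimorphism $\eta(U)\to T$. *)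

theory Defs
  imports Main
begin

record ('o,'m) addcat =
  Obj :: "'o set"
  Arr :: "'m set"
  Dom :: "'m \<Rightarrow> 'o"
  Cod :: "'m \<Rightarrow> 'o"
  Cmp :: "'m \<Rightarrow> 'm \<Rightarrow> 'm"   (* Cmp C g f = g \<circ> f *)
  Idt :: "'o \<Rightarrow> 'm"
  Add :: "'m \<Rightarrow> 'm \<Rightarrow> 'm"
  Zer :: "'o \<Rightarrow> 'o \<Rightarrow> 'm"
  Neg :: "'m \<Rightarrow> 'm"

definition hom :: "('o,'m,'x) addcat_scheme \<Rightarrow> 'o \<Rightarrow> 'o \<Rightarrow> 'm set" where
  "hom C a b = {f \<in> Arr C. Dom C f = a \<and> Cod C f = b}"

definition category :: "('o,'m,'x) addcat_scheme \<Rightarrow> bool" where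
  "category C \<longleftrightarrow>
     (\<forall>f \<in> Arr C. Dom C f \<in> Obj C \<and> Cod C f \<in> Obj C) \<and>
     (\<forall>a \<in> Obj C. Idt C a \<in> hom C a a) \<and>
     (\<forall>a b c f g. f \<in> hom C a b \<and> g \<in> hom C b c \<longrightarrow> Cmp C g f \<in> hom C a c) \<and>
     (\<forall>a b f. f \<in> hom C a b \<longrightarrow> Cmp C (Idt C b) f = f \<and> Cmp C f (Idt C a) = f) \<and>
     (\<forall>a b c d f g h. f \<in> hom C a b \<and> g \<in> hom C b c \<and> h \<in> hom C c d \<longrightarrow>
        Cmp C h (Cmp C g f) = Cmp C (Cmp C h g) f)"

definition preadditive :: "('o,'m,'x) addcat_scheme \<Rightarrow> bool" where
  "preadditive C \<longleftrightarrow> category C \<and>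
     (\<forall>a \<in> Obj C. \<forall>b \<in> Obj C.
        Zer C a b \<in> hom C a b \<and>
        (\<forall>f \<in> hom C a b. \<forall>g \<in> hom C a b. Add C f g \<in> hom C a b \<and> Add C f g = Add C g f) \<and>
        (\<forall>f \<in> hom C a b. \<forall>g \<in> hom C a b. \<forall>h \<in> hom C a b.
            Add C (Add C f g) h = Add C f (Add C g h)) \<and>
        (\<forall>f \<in> hom C a b. Add C f (Zer C a b) = f) \<and>
        (\<forall>f \<in> hom C a b. Neg C f \<in> hom C a b \<and> Add C f (Neg C f) = Zer C a b)) \<and>
     (\<forall>a b c f g h. f \<in> hom C a b \<and> g \<in> hom C a b \<and> h \<in> hom C b c \<longrightarrow>
        Cmp C h (Add C f g) = Add C (Cmp C h f) (Cmp C h g)) \<and>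
     (\<forall>a b c f g h. f \<in> hom C b c \<and> g \<in> hom C b c \<and> h \<in> hom C a b \<longrightarrow>
        Cmp C (Add C f g) h = Add C (Cmp C f h) (Cmp C g h))"

definition zero_object :: "('o,'m,'x) addcat_scheme \<Rightarrow> 'o \<Rightarrow> bool" where
  "zero_object C z \<longleftrightarrow> z \<in> Obj C \<and>
     (\<forall>a \<in> Obj C. (\<exists>!f. f \<in> hom C z a) \<and> (\<exists>!f. f \<in> hom C a z))"

definition is_biproduct ::
  "('o,'m,'x) addcat_scheme \<Rightarrow> 'o \<Rightarrow> 'o \<Rightarrow> 'o \<Rightarrow> 'm \<Rightarrow> 'm \<Rightarrow> 'm \<Rightarrow> 'm \<Rightarrow> bool" where
  "is_biproduct C a b s i1 i2 p1 p2 \<longleftrightarrow>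
     i1 \<in> hom C a s \<and> i2 \<in> hom C b s \<and> p1 \<in> hom C s a \<and> p2 \<in> hom C s b \<and>
     Cmp C p1 i1 = Idt C a \<and> Cmp C p2 i2 = Idt C b \<and>
     Cmp C p1 i2 = Zer C b a \<and> Cmp C p2 i1 = Zer C a b \<and>
     Add C (Cmp C i1 p1) (Cmp C i2 p2) = Idt C s"

definition additive :: "('o,'m,'x) addcat_scheme \<Rightarrow> bool" where
  "additive C \<longleftrightarrow> preadditive C \<and> (\<exists>z. zero_object C z) \<and>
     (\<forall>a \<in> Obj C. \<forall>b \<in> Obj C. \<exists>s i1 i2 p1 p2. is_biproduct C a b s i1 i2 p1 p2)"

definition iso :: "('o,'m,'x) addcat_scheme \<Rightarrow> 'm \<Rightarrow> bool" where
  "iso C f \<longleftrightarrow> f \<in> Arr C \<and> (\<exists>g \<in> hom C (Cod C f) (Dom C f).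
      Cmp C g f = Idt C (Dom C f) \<and> Cmp C f g = Idt C (Cod C f))"

definition is_kernel :: "('o,'m,'x) addcat_scheme \<Rightarrow> 'm \<Rightarrow> 'm \<Rightarrow> bool" where
  "is_kernel C i p \<longleftrightarrow> (\<exists>a b c. i \<in> hom C a b \<and> p \<in> hom C b c \<and> Cmp C p i = Zer C a c \<and>
     (\<forall>d f. f \<in> hom C d b \<and> Cmp C p f = Zer C d c \<longrightarrow> (\<exists>!g. g \<in> hom C d a \<and> Cmp C i g = f)))"

definition is_cokernel :: "('o,'m,'x) addcat_scheme \<Rightarrow> 'm \<Rightarrow> 'm \<Rightarrow> bool" where
  "is_cokernel C p i \<longleftrightarrow> (\<exists>a b c. i \<in> hom C a b \<and> p \<in> hom C b c \<and> Cmp C p i = Zer C a c \<and>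
     (\<forall>d f. f \<in> hom C b d \<and> Cmp C f i = Zer C a d \<longrightarrow> (\<exists>!g. g \<in> hom C c d \<and> Cmp C g p = f)))"

text \<open>Square  f' \<circ> i = i' \<circ> f  with i: a\<rightarrow>b, f: a\<rightarrow>a', f': b\<rightarrow>b', i': a'\<rightarrow>b' is a pushout.\<close>
definition is_pushout :: "('o,'m,'x) addcat_scheme \<Rightarrow> 'm \<Rightarrow> 'm \<Rightarrow> 'm \<Rightarrow> 'm \<Rightarrow> bool" where
  "is_pushout C i f f' i' \<longleftrightarrow>
     i \<in> Arr C \<and> f \<in> Arr C \<and> f' \<in> Arr C \<and> i' \<in> Arr C \<and>
     Dom C i = Dom C f \<and> Dom C f' = Cod C i \<and> Dom C i' = Cod C f \<and> Cod C f' = Cod C i' \<and>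
     Cmp C f' i = Cmp C i' f \<and>
     (\<forall>x u v. u \<in> hom C (Cod C i) x \<and> v \<in> hom C (Cod C f) x \<and> Cmp C u i = Cmp C v f \<longrightarrow>
        (\<exists>!w. w \<in> hom C (Cod C f') x \<and> Cmp C w f' = u \<and> Cmp C w i' = v))"

text \<open>Square  p \<circ> f' = f \<circ> p'  with p: b\<rightarrow>c, f: c'\<rightarrow>c, p': b'\<rightarrow>c', f': b'\<rightarrow>b is a pullback.\<close>
definition is_pullback :: "('o,'m,'x) addcat_scheme \<Rightarrow> 'm \<Rightarrow> 'm \<Rightarrow> 'm \<Rightarrow> 'm \<Rightarrow> bool" where
  "is_pullback C p f f' p' \<longleftrightarrow>
     p \<in> Arr C \<and> f \<in> Arr C \<and> f' \<in> Arr C \<and> p' \<in> Arr C \<and>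
     Cod C p = Cod C f \<and> Cod C f' = Dom C p \<and> Cod C p' = Dom C f \<and> Dom C f' = Dom C p' \<and>
     Cmp C p f' = Cmp C f p' \<and>
     (\<forall>x u v. u \<in> hom C x (Dom C p) \<and> v \<in> hom C x (Dom C f) \<and> Cmp C p u = Cmp C f v \<longrightarrow>
        (\<exists>!w. w \<in> hom C x (Dom C f') \<and> Cmp C f' w = u \<and> Cmp C p' w = v))"

section \<open>Exact categories (Quillen; axioms as in Buehler, Def. 2.1)\<close>

definition adm_mono :: "('o,'m,'x) addcat_scheme \<Rightarrow> ('m \<times> 'm) set \<Rightarrow> 'm \<Rightarrow> bool" where
  "adm_mono C E i \<longleftrightarrow> (\<exists>p. (i, p) \<in> E)"

definition adm_epi :: "('o,'m,'x) addcat_scheme \<Rightarrow> ('m \<times> 'm) set \<Rightarrow> 'm \<Rightarrow> bool" where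
  "adm_epi C E p \<longleftrightarrow> (\<exists>i. (i, p) \<in> E)"

text \<open>E is the class of admissible short exact sequences (pairs (i,p), i then p).\<close>
definition exact_category :: "('o,'m,'x) addcat_scheme \<Rightarrow> ('m \<times> 'm) set \<Rightarrow> bool" where
  "exact_category C E \<longleftrightarrow> additive C \<and>
     (\<forall>(i,p) \<in> E. is_kernel C i p \<and> is_cokernel C p i) \<and>
     (\<forall>i p i' p' \<alpha> \<beta> \<gamma>. (i,p) \<in> E \<and> is_kernel C i' p' \<and> is_cokernel C p' i' \<and>
        iso C \<alpha> \<and> iso C \<beta> \<and> iso C \<gamma> \<and>
        \<alpha> \<in> hom C (Dom C i) (Dom C i') \<and> \<beta> \<in> hom C (Cod C i) (Cod C i') \<and>
        \<gamma> \<in> hom C (Cod C p) (Cod C p') \<and>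
        Cmp C \<beta> i = Cmp C i' \<alpha> \<and> Cmp C \<gamma> p = Cmp C p' \<beta> \<longrightarrow> (i',p') \<in> E) \<and>
     (\<forall>a \<in> Obj C. adm_mono C E (Idt C a)) \<and>
     (\<forall>a \<in> Obj C. adm_epi C E (Idt C a)) \<and>
     (\<forall>a b c i j. i \<in> hom C a b \<and> j \<in> hom C b c \<and> adm_mono C E i \<and> adm_mono C E j
        \<longrightarrow> adm_mono C E (Cmp C j i)) \<and>
     (\<forall>a b c p q. p \<in> hom C a b \<and> q \<in> hom C b c \<and> adm_epi C E p \<and> adm_epi C E q
        \<longrightarrow> adm_epi C E (Cmp C q p)) \<and>
     (\<forall>i f. adm_mono C E i \<and> f \<in> Arr C \<and> Dom C f = Dom C i \<longrightarrow>
        (\<exists>f' i'. is_pushout C i f f' i' \<and> adm_mono C E i')) \<and>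
     (\<forall>p f. adm_epi C E p \<and> f \<in> Arr C \<and> Cod C f = Cod C p \<longrightarrow>
        (\<exists>f' p'. is_pullback C p f f' p' \<and> adm_epi C E p'))"

definition is_functor ::
  "('o,'m,'x) addcat_scheme \<Rightarrow> ('p,'n,'y) addcat_scheme \<Rightarrow> ('o \<Rightarrow> 'p) \<Rightarrow> ('m \<Rightarrow> 'n) \<Rightarrow> bool" where
  "is_functor F G fo fm \<longleftrightarrow>
     (\<forall>a \<in> Obj F. fo a \<in> Obj G \<and> fm (Idt F a) = Idt G (fo a)) \<and>
     (\<forall>a b f. f \<in> hom F a b \<longrightarrow> fm f \<in> hom G (fo a) (fo b)) \<and>
     (\<forall>a b c f g. f \<in> hom F a b \<and> g \<in> hom F b c \<longrightarrow> fm (Cmp F g f) = Cmp G (fm g) (fm f))"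

definition additive_functor ::
  "('o,'m,'x) addcat_scheme \<Rightarrow> ('p,'n,'y) addcat_scheme \<Rightarrow> ('o \<Rightarrow> 'p) \<Rightarrow> ('m \<Rightarrow> 'n) \<Rightarrow> bool" where
  "additive_functor F G fo fm \<longleftrightarrow> is_functor F G fo fm \<and>
     (\<forall>a b f g. f \<in> hom F a b \<and> g \<in> hom F a b \<longrightarrow> fm (Add F f g) = Add G (fm f) (fm g))"

definition exact_functor ::
  "('o,'m,'x) addcat_scheme \<Rightarrow> ('m \<times> 'm) set \<Rightarrow> ('p,'n,'y) addcat_scheme \<Rightarrow> ('n \<times> 'n) set
     \<Rightarrow> ('o \<Rightarrow> 'p) \<Rightarrow> ('m \<Rightarrow> 'n) \<Rightarrow> bool" where
  "exact_functor F EF G EG fo fm \<longleftrightarrow>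
     exact_category F EF \<and> exact_category G EG \<and> additive_functor F G fo fm \<and>
     (\<forall>(i,p) \<in> EF. (fm i, fm p) \<in> EG)"

definition cond_i' where
  "cond_i' F EF G EG fo fm \<longleftrightarrow>
     (\<forall>X \<in> Obj F. \<forall>T t. t \<in> hom G T (fo X) \<and> adm_epi G EG t \<longrightarrow>
        (\<exists>Z z s. z \<in> hom F Z X \<and> adm_epi F EF z \<and> s \<in> hom G (fo Z) T \<and>
                 Cmp G t s = fm z))"

definition cond_ii' where
  "cond_ii' F EF G EG fo fm \<longleftrightarrow>
     (\<forall>X \<in> Obj F. \<forall>Y \<in> Obj F. \<forall>g \<in> hom G (fo X) (fo Y).
        (\<exists>X' p h. p \<in> hom F X' X \<and> adm_epi F EF p \<and> h \<in> hom F X' Y \<and>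
                  Cmp G g (fm p) = fm h))"

definition cond_star' where
  "cond_star' F EF G EG fo fm \<longleftrightarrow>
     (\<forall>T \<in> Obj G. \<exists>U \<in> Obj F. \<exists>e. e \<in> hom G (fo U) T \<and> adm_epi G EG e)"

definition reflects_adm_epi where
  "reflects_adm_epi F EF G EG fo fm \<longleftrightarrow>
     (\<forall>f \<in> Arr F. adm_epi G EG (fm f) \<longrightarrow> adm_epi F EF f)"

end

theory Submission
  imports Defs
begin

locale pcat = fixes C :: "('o,'m,'x) addcat_scheme" assumes pre: "preadditive C"
begin

lemma cat: "category C" using pre unfolding preadditive_def by blast

lemma hom_iff: "f \<in> hom C a b \<longleftrightarrow> f \<in> Arr C \<and> Dom C f = a \<and> Cod C f = b"
  by (simp add: hom_def)

lemma CD: "(\<forall>f \<in> Arr C. Dom C f \<in> Obj C \<and> Cod C f \<in> Obj C)"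
  "(\<forall>a \<in> Obj C. Idt C a \<in> hom C a a)"
  "(\<forall>a b c f g. f \<in> hom C a b \<and> g \<in> hom C b c \<longrightarrow> Cmp C g f \<in> hom C a c)"
  "(\<forall>a b f. f \<in> hom C a b \<longrightarrow> Cmp C (Idt C b) f = f \<and> Cmp C f (Idt C a) = f)"
  "(\<forall>a b c d f g h. f \<in> hom C a b \<and> g \<in> hom C b c \<and> h \<in> hom C c d \<longrightarrow>
        Cmp C h (Cmp C g f) = Cmp C (Cmp C h g) f)"
  using cat[unfolded category_def] by simp_all

lemma hom_obj: "f \<in> hom C a b \<Longrightarrow> a \<in> Obj C \<and> b \<in> Obj C"
  using CD(1) unfolding hom_def by auto

lemma comp_hom[intro]: "f \<in> hom C a b \<Longrightarrow> g \<in> hom C b c \<Longrightarrow> Cmp C g f \<in> hom C a c"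
  using CD(3) by blast

lemma assoc: "f \<in> hom C a b \<Longrightarrow> g \<in> hom C b c \<Longrightarrow> h \<in> hom C c d \<Longrightarrow>
   Cmp C h (Cmp C g f) = Cmp C (Cmp C h g) f"
  using CD(5) by blast

lemma idl: "f \<in> hom C a b \<Longrightarrow> Cmp C (Idt C b) f = f"
  using CD(4) by blast
lemma idr: "f \<in> hom C a b \<Longrightarrow> Cmp C f (Idt C a) = f"
  using CD(4) by blast
lemma id_hom[intro]: "a \<in> Obj C \<Longrightarrow> Idt C a \<in> hom C a a"
  using CD(2) by blast

lemma PO: "\<forall>a \<in> Obj C. \<forall>b \<in> Obj C.
        Zer C a b \<in> hom C a b \<and>
        (\<forall>f \<in> hom C a b. \<forall>g \<in> hom C a b. Add C f g \<in> hom C a b \<and> Add C f g = Add C g f) \<and>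
        (\<forall>f \<in> hom C a b. \<forall>g \<in> hom C a b. \<forall>h \<in> hom C a b.
            Add C (Add C f g) h = Add C f (Add C g h)) \<and>
        (\<forall>f \<in> hom C a b. Add C f (Zer C a b) = f) \<and>
        (\<forall>f \<in> hom C a b. Neg C f \<in> hom C a b \<and> Add C f (Neg C f) = Zer C a b)"
  using pre[unfolded preadditive_def] by (rule conjunct1[OF conjunct2])

lemma PO': "a \<in> Obj C \<Longrightarrow> b \<in> Obj C \<Longrightarrow> Zer C a b \<in> hom C a b \<and>
        (\<forall>f \<in> hom C a b. \<forall>g \<in> hom C a b. Add C f g \<in> hom C a b \<and> Add C f g = Add C g f) \<and>
        (\<forall>f \<in> hom C a b. \<forall>g \<in> hom C a b. \<forall>h \<in> hom C a b.
            Add C (Add C f g) h = Add C f (Add C g h)) \<and>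
        (\<forall>f \<in> hom C a b. Add C f (Zer C a b) = f) \<and>
        (\<forall>f \<in> hom C a b. Neg C f \<in> hom C a b \<and> Add C f (Neg C f) = Zer C a b)"
  using PO by blast

lemma zer_hom[intro]: "a \<in> Obj C \<Longrightarrow> b \<in> Obj C \<Longrightarrow> Zer C a b \<in> hom C a b"
  using PO' by blast

lemma add_hom[intro]: "f \<in> hom C a b \<Longrightarrow> g \<in> hom C a b \<Longrightarrow> Add C f g \<in> hom C a b"
proof - assume f: "f \<in> hom C a b" and g: "g \<in> hom C a b"
  show ?thesis using PO'[OF conjunct1[OF hom_obj[OF f]] conjunct2[OF hom_obj[OF f]]] f g by blast qed
lemma add_comm: "f \<in> hom C a b \<Longrightarrow> g \<in> hom C a b \<Longrightarrow> Add C f g = Add C g f"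
proof - assume f: "f \<in> hom C a b" and g: "g \<in> hom C a b"
  show ?thesis using PO'[OF conjunct1[OF hom_obj[OF f]] conjunct2[OF hom_obj[OF f]]] f g by blast qed
lemma add_assoc: "f \<in> hom C a b \<Longrightarrow> g \<in> hom C a b \<Longrightarrow> h \<in> hom C a b \<Longrightarrow>
   Add C (Add C f g) h = Add C f (Add C g h)"
proof - assume f: "f \<in> hom C a b" and g: "g \<in> hom C a b" and h: "h \<in> hom C a b"
  show ?thesis using PO'[OF conjunct1[OF hom_obj[OF f]] conjunct2[OF hom_obj[OF f]]] f g h by blast qed
lemma add_zer: "f \<in> hom C a b \<Longrightarrow> Add C f (Zer C a b) = f"
proof - assume f: "f \<in> hom C a b"
  show ?thesis using PO'[OF conjunct1[OF hom_obj[OF f]] conjunct2[OF hom_obj[OF f]]] f by blast qed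
lemma zer_add: "f \<in> hom C a b \<Longrightarrow> Add C (Zer C a b) f = f"
proof - assume f: "f \<in> hom C a b"
  have z: "Zer C a b \<in> hom C a b" using hom_obj[OF f] zer_hom by blast
  show ?thesis using add_comm[OF z f] add_zer[OF f] by simp qed
lemma neg_hom[intro]: "f \<in> hom C a b \<Longrightarrow> Neg C f \<in> hom C a b"
proof - assume f: "f \<in> hom C a b"
  show ?thesis using PO'[OF conjunct1[OF hom_obj[OF f]] conjunct2[OF hom_obj[OF f]]] f by blast qed
lemma add_neg: "f \<in> hom C a b \<Longrightarrow> Add C f (Neg C f) = Zer C a b"
proof - assume f: "f \<in> hom C a b"
  show ?thesis using PO'[OF conjunct1[OF hom_obj[OF f]] conjunct2[OF hom_obj[OF f]]] f by blast qed
lemma neg_add: "f \<in> hom C a b \<Longrightarrow> Add C (Neg C f) f = Zer C a b"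
proof - assume f: "f \<in> hom C a b"
  show ?thesis using add_comm[OF neg_hom[OF f] f] add_neg[OF f] by simp qed
lemma PD: "(\<forall>a b c f g h. f \<in> hom C a b \<and> g \<in> hom C a b \<and> h \<in> hom C b c \<longrightarrow>
        Cmp C h (Add C f g) = Add C (Cmp C h f) (Cmp C h g))"
     "(\<forall>a b c f g h. f \<in> hom C b c \<and> g \<in> hom C b c \<and> h \<in> hom C a b \<longrightarrow>
        Cmp C (Add C f g) h = Add C (Cmp C f h) (Cmp C g h))"
  using pre[unfolded preadditive_def] by simp_all
lemma distl: "f \<in> hom C a b \<Longrightarrow> g \<in> hom C a b \<Longrightarrow> h \<in> hom C b c \<Longrightarrow>
   Cmp C h (Add C f g) = Add C (Cmp C h f) (Cmp C h g)"
  using PD(1) by blast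
lemma distr: "f \<in> hom C b c \<Longrightarrow> g \<in> hom C b c \<Longrightarrow> h \<in> hom C a b \<Longrightarrow>
   Cmp C (Add C f g) h = Add C (Cmp C f h) (Cmp C g h)"
  using PD(2) by blast

lemma cancel: assumes y: "y \<in> hom C a b" and e: "Add C y y = y" shows "y = Zer C a b"
proof -
  have "Add C (Add C y y) (Neg C y) = Add C y (Add C y (Neg C y))"
    using add_assoc y by blast
  then show ?thesis using e add_neg[OF y] add_zer[OF y] by simp
qed

lemma zer_comp: assumes f: "f \<in> hom C a b" and c: "c \<in> Obj C"
  shows "Cmp C (Zer C b c) f = Zer C a c"
proof -
  have z: "Zer C b c \<in> hom C b c" using hom_obj[OF f] c by blast
  have "Cmp C (Zer C b c) f = Cmp C (Add C (Zer C b c) (Zer C b c)) f"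
    using add_zer[OF z] by simp
  also have "\<dots> = Add C (Cmp C (Zer C b c) f) (Cmp C (Zer C b c) f)"
    using distr[OF z z f] .
  finally have e: "Cmp C (Zer C b c) f = Add C (Cmp C (Zer C b c) f) (Cmp C (Zer C b c) f)" .
  show ?thesis using cancel[OF comp_hom[OF f z] e[symmetric]] .
qed

lemma comp_zer: assumes g: "g \<in> hom C b c" and a: "a \<in> Obj C"
  shows "Cmp C g (Zer C a b) = Zer C a c"
proof -
  have z: "Zer C a b \<in> hom C a b" using hom_obj[OF g] a by blast
  have "Cmp C g (Zer C a b) = Cmp C g (Add C (Zer C a b) (Zer C a b))"
    using add_zer[OF z] by simp
  also have "\<dots> = Add C (Cmp C g (Zer C a b)) (Cmp C g (Zer C a b))"
    using distl[OF z z g] .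
  finally have e: "Cmp C g (Zer C a b) = Add C (Cmp C g (Zer C a b)) (Cmp C g (Zer C a b))" .
  show ?thesis using cancel[OF comp_hom[OF z g] e[symmetric]] .
qed

end

context pcat begin
lemma bip_homs: "is_biproduct C a b s i1 i2 p1 p2 \<Longrightarrow>
  i1 \<in> hom C a s \<and> i2 \<in> hom C b s \<and> p1 \<in> hom C s a \<and> p2 \<in> hom C s b"
  unfolding is_biproduct_def by blast

lemma bip_eta: assumes B: "is_biproduct C a b s i1 i2 p1 p2" and w: "w \<in> hom C x s"
  shows "w = Add C (Cmp C i1 (Cmp C p1 w)) (Cmp C i2 (Cmp C p2 w))"
proof -
  have h: "i1 \<in> hom C a s" "i2 \<in> hom C b s" "p1 \<in> hom C s a" "p2 \<in> hom C s b"
    using bip_homs[OF B] by auto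
  have "w = Cmp C (Idt C s) w" using idl w by simp
  also have "\<dots> = Cmp C (Add C (Cmp C i1 p1) (Cmp C i2 p2)) w" using B unfolding is_biproduct_def by simp
  also have "\<dots> = Add C (Cmp C (Cmp C i1 p1) w) (Cmp C (Cmp C i2 p2) w)"
    using distr h w by blast
  also have "\<dots> = Add C (Cmp C i1 (Cmp C p1 w)) (Cmp C i2 (Cmp C p2 w))"
    using assoc[OF w h(3) h(1)] assoc[OF w h(4) h(2)] by simp
  finally show ?thesis .
qed

lemma bip_p1: assumes B: "is_biproduct C a b s i1 i2 p1 p2" and u: "u \<in> hom C x a" and v: "v \<in> hom C x b"
  shows "Cmp C p1 (Add C (Cmp C i1 u) (Cmp C i2 v)) = u"
proof -
  have h: "i1 \<in> hom C a s" "i2 \<in> hom C b s" "p1 \<in> hom C s a" "p2 \<in> hom C s b"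
    using bip_homs[OF B] by auto
  have "Cmp C p1 (Add C (Cmp C i1 u) (Cmp C i2 v)) = Add C (Cmp C p1 (Cmp C i1 u)) (Cmp C p1 (Cmp C i2 v))"
    using distl h u v by blast
  also have "\<dots> = Add C (Cmp C (Cmp C p1 i1) u) (Cmp C (Cmp C p1 i2) v)"
    using assoc[OF u h(1) h(3)] assoc[OF v h(2) h(3)] by simp
  also have "\<dots> = Add C (Cmp C (Idt C a) u) (Cmp C (Zer C b a) v)"
    using B unfolding is_biproduct_def by simp
  also have "\<dots> = Add C u (Zer C x a)" using idl zer_comp u v hom_obj by metis
  also have "\<dots> = u" using add_zer u by simp
  finally show ?thesis .
qed

lemma bip_swap: assumes B: "is_biproduct C a b s i1 i2 p1 p2"
  shows "is_biproduct C b a s i2 i1 p2 p1"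
proof -
  have h: "i1 \<in> hom C a s" "i2 \<in> hom C b s" "p1 \<in> hom C s a" "p2 \<in> hom C s b"
    using bip_homs[OF B] by auto
  have "Add C (Cmp C i2 p2) (Cmp C i1 p1) = Add C (Cmp C i1 p1) (Cmp C i2 p2)"
    using add_comm[OF comp_hom[OF h(4) h(2)] comp_hom[OF h(3) h(1)]] .
  then show ?thesis using B unfolding is_biproduct_def by simp
qed

lemma bip_p2: assumes B: "is_biproduct C a b s i1 i2 p1 p2" and u: "u \<in> hom C x a" and v: "v \<in> hom C x b"
  shows "Cmp C p2 (Add C (Cmp C i1 u) (Cmp C i2 v)) = v"
proof -
  have h: "i1 \<in> hom C a s" "i2 \<in> hom C b s"
    using bip_homs[OF B] by auto
  have "Add C (Cmp C i1 u) (Cmp C i2 v) = Add C (Cmp C i2 v) (Cmp C i1 u)"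
    using add_comm h u v by blast
  thus ?thesis using bip_p1[OF bip_swap[OF B] v u] by simp
qed

lemma iso_id: "a \<in> Obj C \<Longrightarrow> iso C (Idt C a)"
proof -
  assume a: "a \<in> Obj C"
  have h: "Idt C a \<in> hom C a a" using id_hom[OF a] .
  then have "Dom C (Idt C a) = a" "Cod C (Idt C a) = a" "Idt C a \<in> Arr C" using hom_iff by auto
  then show ?thesis unfolding iso_def using h idl[OF h] by auto
qed
end

locale exc = fixes C :: "('o,'m,'x) addcat_scheme" and E assumes ex: "exact_category C E"

sublocale exc \<subseteq> pcat
proof
  show "preadditive C" using ex unfolding exact_category_def additive_def by simp
qed

context exc begin
lemma EX1: "\<forall>(i,p) \<in> E. is_kernel C i p \<and> is_cokernel C p i"
  using ex[unfolded exact_category_def] by (elim conjE) assumption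

lemma EX2: "(\<forall>i p i' p' \<alpha> \<beta> \<gamma>. (i,p) \<in> E \<and> is_kernel C i' p' \<and> is_cokernel C p' i' \<and>
  iso C \<alpha> \<and> iso C \<beta> \<and> iso C \<gamma> \<and>
  \<alpha> \<in> hom C (Dom C i) (Dom C i') \<and> \<beta> \<in> hom C (Cod C i) (Cod C i') \<and>
  \<gamma> \<in> hom C (Cod C p) (Cod C p') \<and>
  Cmp C \<beta> i = Cmp C i' \<alpha> \<and> Cmp C \<gamma> p = Cmp C p' \<beta> \<longrightarrow> (i',p') \<in> E)"
  using ex[unfolded exact_category_def] by (elim conjE) assumption

lemma EX3: "(\<forall>a \<in> Obj C. adm_mono C E (Idt C a))"
  using ex[unfolded exact_category_def] by (elim conjE) assumption

lemma EX4: "(\<forall>a \<in> Obj C. adm_epi C E (Idt C a))"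
  using ex[unfolded exact_category_def] by (elim conjE) assumption

lemma EX5: "(\<forall>a b c p q. p \<in> hom C a b \<and> q \<in> hom C b c \<and> adm_epi C E p \<and> adm_epi C E q
  \<longrightarrow> adm_epi C E (Cmp C q p))"
  using ex[unfolded exact_category_def] by (elim conjE) assumption

lemma EX6: "(\<forall>p f. adm_epi C E p \<and> f \<in> Arr C \<and> Cod C f = Cod C p \<longrightarrow>
  (\<exists>f' p'. is_pullback C p f f' p' \<and> adm_epi C E p'))"
  using ex[unfolded exact_category_def] by (elim conjE) assumption

lemma E_ker: "(i,p) \<in> E \<Longrightarrow> is_kernel C i p \<and> is_cokernel C p i"
  using bspec[OF EX1] by fastforce

lemma E_iso: "(i,p) \<in> E \<Longrightarrow> is_kernel C i' p' \<Longrightarrow> is_cokernel C p' i' \<Longrightarrow>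
        iso C \<alpha> \<Longrightarrow> iso C \<beta> \<Longrightarrow> iso C \<gamma> \<Longrightarrow>
        \<alpha> \<in> hom C (Dom C i) (Dom C i') \<Longrightarrow> \<beta> \<in> hom C (Cod C i) (Cod C i') \<Longrightarrow>
        \<gamma> \<in> hom C (Cod C p) (Cod C p') \<Longrightarrow>
        Cmp C \<beta> i = Cmp C i' \<alpha> \<Longrightarrow> Cmp C \<gamma> p = Cmp C p' \<beta> \<Longrightarrow> (i',p') \<in> E"
  by (rule EX2[rule_format], intro conjI, assumption+)

lemma id_epi: "a \<in> Obj C \<Longrightarrow> adm_epi C E (Idt C a)"
  using EX4 by blast

lemma id_mono: "a \<in> Obj C \<Longrightarrow> adm_mono C E (Idt C a)"
  using EX3 by blast

lemma comp_epi: "p \<in> hom C a b \<Longrightarrow> q \<in> hom C b c \<Longrightarrow> adm_epi C E p \<Longrightarrow> adm_epi C E q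
        \<Longrightarrow> adm_epi C E (Cmp C q p)"
  by (rule EX5[rule_format], intro conjI, assumption+)

lemma pb_ax: "adm_epi C E p \<Longrightarrow> f \<in> Arr C \<Longrightarrow> Cod C f = Cod C p \<Longrightarrow>
        (\<exists>f' p'. is_pullback C p f f' p' \<and> adm_epi C E p')"
  by (rule EX6[rule_format], intro conjI, assumption+)

lemma iso_epi:
  assumes th: "\<theta> \<in> hom C d c" and th': "\<theta>' \<in> hom C c d"
    and e1: "Cmp C \<theta>' \<theta> = Idt C d" and e2: "Cmp C \<theta> \<theta>' = Idt C c"
  shows "adm_epi C E \<theta>"
proof -
  have c: "c \<in> Obj C" and d: "d \<in> Obj C" using hom_obj th by auto
  obtain i where iE: "(i, Idt C c) \<in> E" using id_epi[OF c] unfolding adm_epi_def by blast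
  then have K: "is_kernel C i (Idt C c)" using E_ker by blast
  then obtain a0 b0 c0 where i0: "i \<in> hom C a0 b0" and id0: "Idt C c \<in> hom C b0 c0"
     and z0: "Cmp C (Idt C c) i = Zer C a0 c0"
     and U: "\<forall>d f. f \<in> hom C d b0 \<and> Cmp C (Idt C c) f = Zer C d c0 \<longrightarrow> (\<exists>!g. g \<in> hom C d a0 \<and> Cmp C i g = f)"
    unfolding is_kernel_def by blast
  have "b0 = c" "c0 = c" using id0 id_hom[OF c] hom_iff by auto
  note i = i0[unfolded this] and U = U[unfolded this] and z0 = z0[unfolded this]
  have a0: "a0 \<in> Obj C" using hom_obj i by blast
  have iz: "i = Zer C a0 c" using z0 idl i by simp
  let ?i' = "Cmp C \<theta>' i"
  have i'h: "?i' \<in> hom C a0 d" using i th' by blast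
  have ker: "is_kernel C ?i' \<theta>"
    unfolding is_kernel_def
  proof (intro exI conjI allI impI)
    show "?i' \<in> hom C a0 d" by (rule i'h)
    show "\<theta> \<in> hom C d c" by (rule th)
    show "Cmp C \<theta> ?i' = Zer C a0 c"
      using assoc[OF i th' th] e2 idl i iz by simp
    fix d1 f assume "f \<in> hom C d1 d \<and> Cmp C \<theta> f = Zer C d1 c"
    then have f: "f \<in> hom C d1 d" and fz: "Cmp C \<theta> f = Zer C d1 c" by auto
    have tf: "Cmp C \<theta> f \<in> hom C d1 c" using f th by blast
    have "Cmp C (Idt C c) (Cmp C \<theta> f) = Zer C d1 c" using idl tf fz by simp
    then obtain g where g: "g \<in> hom C d1 a0" "Cmp C i g = Cmp C \<theta> f"
      and gu: "\<And>g'. g' \<in> hom C d1 a0 \<and> Cmp C i g' = Cmp C \<theta> f \<Longrightarrow> g' = g"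
      using U tf by metis
    show "\<exists>!g. g \<in> hom C d1 a0 \<and> Cmp C ?i' g = f"
    proof (rule ex1I[of _ g])
      have "Cmp C ?i' g = Cmp C \<theta>' (Cmp C i g)" using assoc[OF g(1) i th'] by simp
      also have "\<dots> = Cmp C (Cmp C \<theta>' \<theta>) f" using g(2) assoc[OF f th th'] by simp
      also have "\<dots> = f" using e1 idl f by simp
      finally show "g \<in> hom C d1 a0 \<and> Cmp C ?i' g = f" using g by simp
    next
      fix g' assume g': "g' \<in> hom C d1 a0 \<and> Cmp C ?i' g' = f"
      have ig': "Cmp C i g' \<in> hom C d1 c" using g' i by blast
      have "Cmp C i g' = Cmp C (Cmp C \<theta> \<theta>') (Cmp C i g')" using e2 idl ig' by simp
      also have "\<dots> = Cmp C \<theta> (Cmp C \<theta>' (Cmp C i g'))" using assoc[OF ig' th' th] by simp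
      also have "\<dots> = Cmp C \<theta> f" using g' assoc[OF _ i th'] by metis
      finally show "g' = g" using gu g' by blast
    qed
  qed
  have coker: "is_cokernel C \<theta> ?i'"
    unfolding is_cokernel_def
  proof (intro exI conjI allI impI)
    show "?i' \<in> hom C a0 d" by (rule i'h)
    show "\<theta> \<in> hom C d c" by (rule th)
    show "Cmp C \<theta> ?i' = Zer C a0 c"
      using assoc[OF i th' th] e2 idl i iz by simp
    fix x f assume "f \<in> hom C d x \<and> Cmp C f ?i' = Zer C a0 x"
    then have f: "f \<in> hom C d x" by auto
    show "\<exists>!g. g \<in> hom C c x \<and> Cmp C g \<theta> = f"
    proof (rule ex1I[of _ "Cmp C f \<theta>'"])
      show "Cmp C f \<theta>' \<in> hom C c x \<and> Cmp C (Cmp C f \<theta>') \<theta> = f"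
        using assoc[OF th th' f] e1 idr f th' by auto
    next
      fix g assume g: "g \<in> hom C c x \<and> Cmp C g \<theta> = f"
      have "g = Cmp C g (Cmp C \<theta> \<theta>')" using e2 idr[of g c x] g by simp
      also have "\<dots> = Cmp C f \<theta>'" using assoc[OF th' th] g by metis
      finally show "g = Cmp C f \<theta>'" .
    qed
  qed
  have iso': "iso C \<theta>'" unfolding iso_def using th th' e1 e2 hom_iff by auto
  have "(?i', \<theta>) \<in> E"
  proof (rule E_iso[OF iE ker coker iso_id[OF a0] iso' iso_id[OF c]])
    show "Idt C a0 \<in> hom C (Dom C i) (Dom C ?i')" using i i'h hom_iff id_hom[OF a0] by auto
    show "\<theta>' \<in> hom C (Cod C i) (Cod C ?i')" using i i'h hom_iff th' by auto
    show "Idt C c \<in> hom C (Cod C (Idt C c)) (Cod C \<theta>)" using th hom_iff id_hom[OF c] by auto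
    show "Cmp C \<theta>' i = Cmp C ?i' (Idt C a0)" using idr i'h by simp
    show "Cmp C (Idt C c) (Idt C c) = Cmp C \<theta> \<theta>'" using e2 idl id_hom[OF c] by simp
  qed
  then show ?thesis unfolding adm_epi_def by blast
qed
end

context exc begin

lemma pb_epi: assumes pe: "adm_epi C E p" and P: "is_pullback C p f f' p'"
  shows "adm_epi C E p'"
proof -
  have fa: "f \<in> Arr C" "Cod C f = Cod C p" using P unfolding is_pullback_def by auto
  obtain f'' p'' where P2: "is_pullback C p f f'' p''" and pe2: "adm_epi C E p''"
    using pb_ax[OF pe fa] by blast
  define D1 where "D1 = Dom C f'"
  define D2 where "D2 = Dom C f''"
  have h1: "f' \<in> hom C D1 (Dom C p)" "p' \<in> hom C D1 (Dom C f)"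
    using P unfolding is_pullback_def D1_def hom_def by auto
  have h2: "f'' \<in> hom C D2 (Dom C p)" "p'' \<in> hom C D2 (Dom C f)"
    using P2 unfolding is_pullback_def D2_def hom_def by auto
  have sq1: "Cmp C p f' = Cmp C f p'" and sq2: "Cmp C p f'' = Cmp C f p''"
    using P P2 unfolding is_pullback_def by auto
  have U1: "\<And>x u v. u \<in> hom C x (Dom C p) \<Longrightarrow> v \<in> hom C x (Dom C f) \<Longrightarrow> Cmp C p u = Cmp C f v \<Longrightarrow>
        (\<exists>!w. w \<in> hom C x D1 \<and> Cmp C f' w = u \<and> Cmp C p' w = v)"
    using P unfolding is_pullback_def D1_def by blast
  have U2: "\<And>x u v. u \<in> hom C x (Dom C p) \<Longrightarrow> v \<in> hom C x (Dom C f) \<Longrightarrow> Cmp C p u = Cmp C f v \<Longrightarrow>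
        (\<exists>!w. w \<in> hom C x D2 \<and> Cmp C f'' w = u \<and> Cmp C p'' w = v)"
    using P2 unfolding is_pullback_def D2_def by blast
  obtain \<theta> where th: "\<theta> \<in> hom C D1 D2" "Cmp C f'' \<theta> = f'" "Cmp C p'' \<theta> = p'"
    using U2[OF h1 sq1] by blast
  obtain \<theta>' where th': "\<theta>' \<in> hom C D2 D1" "Cmp C f' \<theta>' = f''" "Cmp C p' \<theta>' = p''"
    using U1[OF h2 sq2] by blast
  have D1: "D1 \<in> Obj C" and D2: "D2 \<in> Obj C" using hom_obj th by auto
  have "Cmp C \<theta>' \<theta> = Idt C D1"
  proof -
    have a: "Cmp C \<theta>' \<theta> \<in> hom C D1 D1 \<and> Cmp C f' (Cmp C \<theta>' \<theta>) = f' \<and> Cmp C p' (Cmp C \<theta>' \<theta>) = p'"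
      using th th' assoc[OF th(1) th'(1) h1(1)] assoc[OF th(1) th'(1) h1(2)] by auto
    have b: "Idt C D1 \<in> hom C D1 D1 \<and> Cmp C f' (Idt C D1) = f' \<and> Cmp C p' (Idt C D1) = p'"
      using idr h1 D1 by auto
    show ?thesis using U1[OF h1 sq1] a b by blast
  qed
  moreover have "Cmp C \<theta> \<theta>' = Idt C D2"
  proof -
    have a: "Cmp C \<theta> \<theta>' \<in> hom C D2 D2 \<and> Cmp C f'' (Cmp C \<theta> \<theta>') = f'' \<and> Cmp C p'' (Cmp C \<theta> \<theta>') = p''"
      using th th' assoc[OF th'(1) th(1) h2(1)] assoc[OF th'(1) th(1) h2(2)] by auto
    have b: "Idt C D2 \<in> hom C D2 D2 \<and> Cmp C f'' (Idt C D2) = f'' \<and> Cmp C p'' (Idt C D2) = p''"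
      using idr h2 D2 by auto
    show ?thesis using U2[OF h2 sq2] a b by blast
  qed
  ultimately have "adm_epi C E \<theta>" using iso_epi th(1) th'(1) by blast
  then show ?thesis using comp_epi[OF th(1) h2(2)] pe2 th(3) by simp
qed

lemma proj_epi: assumes B: "is_biproduct C c b S j1 j2 q1 q2" shows "adm_epi C E q1"
proof -
  have h: "j1 \<in> hom C c S" "j2 \<in> hom C b S" "q1 \<in> hom C S c" "q2 \<in> hom C S b"
    using bip_homs[OF B] by auto
  have b: "b \<in> Obj C" and c: "c \<in> Obj C" using hom_obj h by auto
  obtain \<pi> where iE: "(Idt C b, \<pi>) \<in> E" using id_mono[OF b] unfolding adm_mono_def by blast
  then have pe: "adm_epi C E \<pi>" unfolding adm_epi_def by blast
  have CK: "is_cokernel C \<pi> (Idt C b)" using E_ker iE by blast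
  then obtain a0 b0 Q where i0: "Idt C b \<in> hom C a0 b0" and pi: "\<pi> \<in> hom C b0 Q"
     and z0: "Cmp C \<pi> (Idt C b) = Zer C a0 Q"
     and U: "\<forall>d f. f \<in> hom C b0 d \<and> Cmp C f (Idt C b) = Zer C a0 d \<longrightarrow> (\<exists>!g. g \<in> hom C Q d \<and> Cmp C g \<pi> = f)"
    unfolding is_cokernel_def by blast
  have "a0 = b" "b0 = b" using i0 id_hom[OF b] hom_iff by auto
  note pi = pi[unfolded this] and U = U[unfolded this] and z0 = z0[unfolded this]
  have Q: "Q \<in> Obj C" using hom_obj pi by blast
  have piz: "\<pi> = Zer C b Q" using z0 idr pi by simp
  have "Idt C Q = Zer C Q Q"
  proof -
    have "\<exists>!g. g \<in> hom C Q Q \<and> Cmp C g \<pi> = \<pi>" using U[rule_format, OF conjI[OF pi z0]] .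
    moreover have "Cmp C (Idt C Q) \<pi> = \<pi>" using idl pi by simp
    moreover have "Cmp C (Zer C Q Q) \<pi> = \<pi>" using zer_comp pi Q piz by simp
    ultimately show ?thesis using id_hom[OF Q] zer_hom[OF Q Q] by blast
  qed
  then have intoQ: "\<And>x w. w \<in> hom C x Q \<Longrightarrow> w = Zer C x Q"
    using idl zer_comp Q by (metis (no_types))
  have PB: "is_pullback C \<pi> (Zer C c Q) q2 q1"
    unfolding is_pullback_def
  proof (intro conjI allI impI)
    show "\<pi> \<in> Arr C" "Zer C c Q \<in> Arr C" "q2 \<in> Arr C" "q1 \<in> Arr C"
      using pi h zer_hom[OF c Q] hom_iff by auto
    show "Cod C \<pi> = Cod C (Zer C c Q)" "Cod C q2 = Dom C \<pi>" "Cod C q1 = Dom C (Zer C c Q)"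
      "Dom C q2 = Dom C q1"
      using pi h zer_hom[OF c Q] hom_iff by auto
    have S: "S \<in> Obj C" using hom_obj h by blast
    show "Cmp C \<pi> q2 = Cmp C (Zer C c Q) q1"
      using intoQ[OF comp_hom[OF h(4) pi]] intoQ[OF comp_hom[OF h(3) zer_hom[OF c Q]]] by simp
    fix x u v
    assume uv: "u \<in> hom C x (Dom C \<pi>) \<and> v \<in> hom C x (Dom C (Zer C c Q)) \<and> Cmp C \<pi> u = Cmp C (Zer C c Q) v"
    then have u: "u \<in> hom C x b" and v: "v \<in> hom C x c" using pi zer_hom[OF c Q] hom_iff by auto
    show "\<exists>!w. w \<in> hom C x (Dom C q2) \<and> Cmp C q2 w = u \<and> Cmp C q1 w = v"
    proof (rule ex1I[of _ "Add C (Cmp C j1 v) (Cmp C j2 u)"])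
      show "Add C (Cmp C j1 v) (Cmp C j2 u) \<in> hom C x (Dom C q2) \<and>
         Cmp C q2 (Add C (Cmp C j1 v) (Cmp C j2 u)) = u \<and> Cmp C q1 (Add C (Cmp C j1 v) (Cmp C j2 u)) = v"
      proof -
        have wh: "Add C (Cmp C j1 v) (Cmp C j2 u) \<in> hom C x S"
          using add_hom[OF comp_hom[OF v h(1)] comp_hom[OF u h(2)]] .
        have "Dom C q2 = S" using h(4) hom_iff by simp
        then show ?thesis using wh bip_p1[OF B v u] bip_p2[OF B v u] by simp
      qed
    next
      fix w assume w: "w \<in> hom C x (Dom C q2) \<and> Cmp C q2 w = u \<and> Cmp C q1 w = v"
      then have "w \<in> hom C x S" using h hom_iff by auto
      then show "w = Add C (Cmp C j1 v) (Cmp C j2 u)" using w by (subst bip_eta[OF B], simp_all)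
    qed
  qed
  show ?thesis by (rule pb_epi[OF pe PB])
qed

end

context exc begin

lemma bip_all: "\<forall>a \<in> Obj C. \<forall>b \<in> Obj C. \<exists>s i1 i2 p1 p2. is_biproduct C a b s i1 i2 p1 p2"
  using ex unfolding exact_category_def additive_def by (elim conjE) assumption
lemma bip_ex: "a \<in> Obj C \<Longrightarrow> b \<in> Obj C \<Longrightarrow> \<exists>s i1 i2 p1 p2. is_biproduct C a b s i1 i2 p1 p2"
  using bip_all by blast

lemma L1: assumes B: "is_biproduct C a b s i1 i2 p1 p2" and f: "f \<in> hom C a c"
  and fe: "adm_epi C E f" and g: "g \<in> hom C b c"
  shows "adm_epi C E (Add C (Cmp C f p1) (Cmp C g p2))"
proof -
  have h: "i1 \<in> hom C a s" "i2 \<in> hom C b s" "p1 \<in> hom C s a" "p2 \<in> hom C s b"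
    using bip_homs[OF B] by auto
  have b: "b \<in> Obj C" and c: "c \<in> Obj C" using hom_obj g by auto
  obtain S j1 j2 q1 q2 where B2: "is_biproduct C c b S j1 j2 q1 q2" using bip_ex[OF c b] by blast
  have k: "j1 \<in> hom C c S" "j2 \<in> hom C b S" "q1 \<in> hom C S c" "q2 \<in> hom C S b"
    using bip_homs[OF B2] by auto
  define r where "r = Add C (Cmp C f p1) (Cmp C g p2)"
  have r: "r \<in> hom C s c" unfolding r_def using f g h by blast
  define M where "M = Add C (Cmp C j1 r) (Cmp C j2 p2)"
  have M: "M \<in> hom C s S" unfolding M_def using r k h by blast
  define ng where "ng = Neg C g"
  have ng: "ng \<in> hom C b c" unfolding ng_def using g by blast
  define \<psi> where "\<psi> = Add C q1 (Cmp C ng q2)"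
  have psi: "\<psi> \<in> hom C S c" unfolding \<psi>_def using ng k by blast
  have q1M: "Cmp C q1 M = r" unfolding M_def using bip_p1[OF B2 r h(4)] .
  have q2M: "Cmp C q2 M = p2" unfolding M_def using bip_p2[OF B2 r h(4)] .
  have gng: "Add C (Cmp C g p2) (Cmp C ng p2) = Zer C s c"
  proof -
    have "Add C (Cmp C g p2) (Cmp C ng p2) = Cmp C (Add C g ng) p2" using distr[OF g ng h(4)] by simp
    also have "\<dots> = Cmp C (Zer C b c) p2" using add_neg g ng_def by simp
    also have "\<dots> = Zer C s c" using zer_comp[OF h(4) c] .
    finally show ?thesis .
  qed
  have psiM: "Cmp C \<psi> M = Cmp C f p1"
  proof -
    have "Cmp C \<psi> M = Add C (Cmp C q1 M) (Cmp C (Cmp C ng q2) M)"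
      unfolding \<psi>_def using distr[OF k(3) comp_hom[OF k(4) ng] M] .
    also have "\<dots> = Add C r (Cmp C ng p2)" using q1M q2M assoc[OF M k(4) ng] by simp
    also have "\<dots> = Add C (Cmp C f p1) (Add C (Cmp C g p2) (Cmp C ng p2))"
      unfolding r_def using add_assoc[OF comp_hom[OF h(3) f] comp_hom[OF h(4) g] comp_hom[OF h(4) ng]] .
    also have "\<dots> = Cmp C f p1" using gng add_zer[OF comp_hom[OF h(3) f]] by simp
    finally show ?thesis .
  qed
  have PB: "is_pullback C f \<psi> p1 M"
    unfolding is_pullback_def
  proof (intro conjI allI impI)
    show "f \<in> Arr C" "\<psi> \<in> Arr C" "p1 \<in> Arr C" "M \<in> Arr C"
      using f psi h M hom_iff by auto
    show "Cod C f = Cod C \<psi>" "Cod C p1 = Dom C f" "Cod C M = Dom C \<psi>" "Dom C p1 = Dom C M"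
      using f psi h M hom_iff by auto
    show "Cmp C f p1 = Cmp C \<psi> M" using psiM by simp
    fix x u v
    assume uv: "u \<in> hom C x (Dom C f) \<and> v \<in> hom C x (Dom C \<psi>) \<and> Cmp C f u = Cmp C \<psi> v"
    then have u: "u \<in> hom C x a" and v: "v \<in> hom C x S" and fu: "Cmp C f u = Cmp C \<psi> v"
      using f psi hom_iff by auto
    have x: "x \<in> Obj C" using hom_obj u by blast
    have qv1: "Cmp C q1 v \<in> hom C x c" and qv2: "Cmp C q2 v \<in> hom C x b" using v k by auto
    define w where "w = Add C (Cmp C i1 u) (Cmp C i2 (Cmp C q2 v))"
    have w: "w \<in> hom C x s" unfolding w_def using u qv2 h by blast
    have p1w: "Cmp C p1 w = u" unfolding w_def using bip_p1[OF B u qv2] .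
    have p2w: "Cmp C p2 w = Cmp C q2 v" unfolding w_def using bip_p2[OF B u qv2] .
    have rw: "Cmp C r w = Cmp C q1 v"
    proof -
      have "Cmp C r w = Add C (Cmp C (Cmp C f p1) w) (Cmp C (Cmp C g p2) w)"
        unfolding r_def using distr[OF comp_hom[OF h(3) f] comp_hom[OF h(4) g] w] .
      also have "\<dots> = Add C (Cmp C f u) (Cmp C g (Cmp C q2 v))"
        using assoc[OF w h(3) f] assoc[OF w h(4) g] p1w p2w by simp
      also have "Cmp C f u = Add C (Cmp C q1 v) (Cmp C ng (Cmp C q2 v))"
        using fu distr[OF k(3) comp_hom[OF k(4) ng] v] assoc[OF v k(4) ng] unfolding \<psi>_def by simp
      also have "Add C (Add C (Cmp C q1 v) (Cmp C ng (Cmp C q2 v))) (Cmp C g (Cmp C q2 v))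
          = Add C (Cmp C q1 v) (Add C (Cmp C ng (Cmp C q2 v)) (Cmp C g (Cmp C q2 v)))"
        using add_assoc[OF qv1 comp_hom[OF qv2 ng] comp_hom[OF qv2 g]] .
      also have "Add C (Cmp C ng (Cmp C q2 v)) (Cmp C g (Cmp C q2 v)) = Cmp C (Add C ng g) (Cmp C q2 v)"
        using distr[OF ng g qv2] by simp
      also have "\<dots> = Cmp C (Zer C b c) (Cmp C q2 v)" using neg_add g ng_def by simp
      also have "\<dots> = Zer C x c" using zer_comp[OF qv2 c] .
      finally show ?thesis using add_zer qv1 by simp
    qed
    have Mw: "Cmp C M w = v"
    proof -
      have "Cmp C M w = Add C (Cmp C (Cmp C j1 r) w) (Cmp C (Cmp C j2 p2) w)"
        unfolding M_def using distr[OF comp_hom[OF r k(1)] comp_hom[OF h(4) k(2)] w] .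
      also have "\<dots> = Add C (Cmp C j1 (Cmp C q1 v)) (Cmp C j2 (Cmp C q2 v))"
        using assoc[OF w r k(1)] assoc[OF w h(4) k(2)] rw p2w by simp
      also have "\<dots> = v" using bip_eta[OF B2 v] by simp
      finally show ?thesis .
    qed
    show "\<exists>!w. w \<in> hom C x (Dom C p1) \<and> Cmp C p1 w = u \<and> Cmp C M w = v"
    proof (rule ex1I[of _ w])
      show "w \<in> hom C x (Dom C p1) \<and> Cmp C p1 w = u \<and> Cmp C M w = v"
        using w p1w Mw h hom_iff by auto
    next
      fix w' assume w': "w' \<in> hom C x (Dom C p1) \<and> Cmp C p1 w' = u \<and> Cmp C M w' = v"
      then have w'h: "w' \<in> hom C x s" using h hom_iff by auto
      have "Cmp C p2 w' = Cmp C q2 v" using w' q2M assoc[OF w'h M k(4)] by simp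
      then show "w' = w" unfolding w_def using bip_eta[OF B w'h] w' by simp
    qed
  qed
  have "adm_epi C E M" by (rule pb_epi[OF fe PB])
  moreover have "adm_epi C E q1" by (rule proj_epi[OF B2])
  ultimately have "adm_epi C E (Cmp C q1 M)" using comp_epi M k by blast
  then show ?thesis using q1M r_def by simp
qed

lemma L1': assumes B: "is_biproduct C a b s i1 i2 p1 p2" and f: "f \<in> hom C a c"
  and g: "g \<in> hom C b c" and ge: "adm_epi C E g"
  shows "adm_epi C E (Add C (Cmp C f p1) (Cmp C g p2))"
proof -
  have h: "p1 \<in> hom C s a" "p2 \<in> hom C s b" using bip_homs[OF B] by auto
  have "adm_epi C E (Add C (Cmp C g p2) (Cmp C f p1))" using L1[OF bip_swap[OF B] g ge f] .
  then show ?thesis using add_comm[OF comp_hom[OF h(1) f] comp_hom[OF h(2) g]] by simp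
qed
end

locale exfun = F: exc F EF + G: exc G EG
  for F :: "('o,'m,'x) addcat_scheme" and EF and G :: "('p,'n,'y) addcat_scheme" and EG
  and fo :: "'o \<Rightarrow> 'p" and fm :: "'m \<Rightarrow> 'n" +
  assumes xf: "exact_functor F EF G EG fo fm"
begin

lemma fm_hom: "f \<in> hom F a b \<Longrightarrow> fm f \<in> hom G (fo a) (fo b)"
  using xf unfolding exact_functor_def additive_functor_def is_functor_def by blast
lemma fm_comp: "f \<in> hom F a b \<Longrightarrow> g \<in> hom F b c \<Longrightarrow> fm (Cmp F g f) = Cmp G (fm g) (fm f)"
  using xf unfolding exact_functor_def additive_functor_def is_functor_def by blast
lemma fm_id: "a \<in> Obj F \<Longrightarrow> fm (Idt F a) = Idt G (fo a)"
  using xf unfolding exact_functor_def additive_functor_def is_functor_def by blast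
lemma fo_obj: "a \<in> Obj F \<Longrightarrow> fo a \<in> Obj G"
  using xf unfolding exact_functor_def additive_functor_def is_functor_def by blast
lemma fm_add: "f \<in> hom F a b \<Longrightarrow> g \<in> hom F a b \<Longrightarrow> fm (Add F f g) = Add G (fm f) (fm g)"
  using xf unfolding exact_functor_def additive_functor_def by blast
lemma fm_E: "(i,p) \<in> EF \<Longrightarrow> (fm i, fm p) \<in> EG"
  using xf unfolding exact_functor_def by blast
lemma fm_epi: "adm_epi F EF p \<Longrightarrow> adm_epi G EG (fm p)"
  using fm_E unfolding adm_epi_def by blast

lemma fm_zer: assumes a: "a \<in> Obj F" and b: "b \<in> Obj F"
  shows "fm (Zer F a b) = Zer G (fo a) (fo b)"
proof -
  have z: "Zer F a b \<in> hom F a b" using a b by blast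
  have "Add G (fm (Zer F a b)) (fm (Zer F a b)) = fm (Zer F a b)"
    using fm_add[OF z z] F.add_zer[OF z] by simp
  then show ?thesis using G.cancel fm_hom[OF z] by blast
qed

lemma fm_bip: assumes B: "is_biproduct F a b s i1 i2 p1 p2"
  shows "is_biproduct G (fo a) (fo b) (fo s) (fm i1) (fm i2) (fm p1) (fm p2)"
proof -
  have h: "i1 \<in> hom F a s" "i2 \<in> hom F b s" "p1 \<in> hom F s a" "p2 \<in> hom F s b"
    using F.bip_homs[OF B] by auto
  have o: "a \<in> Obj F" "b \<in> Obj F" "s \<in> Obj F" using F.hom_obj h by auto
  have e: "Cmp F p1 i1 = Idt F a" "Cmp F p2 i2 = Idt F b"
     "Cmp F p1 i2 = Zer F b a" "Cmp F p2 i1 = Zer F a b"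
     "Add F (Cmp F i1 p1) (Cmp F i2 p2) = Idt F s" using B unfolding is_biproduct_def by auto
  have c1: "Cmp G (fm p1) (fm i1) = Idt G (fo a)" using fm_comp[OF h(1) h(3)] e(1) fm_id o by simp
  have c2: "Cmp G (fm p2) (fm i2) = Idt G (fo b)" using fm_comp[OF h(2) h(4)] e(2) fm_id o by simp
  have c3: "Cmp G (fm p1) (fm i2) = Zer G (fo b) (fo a)" using fm_comp[OF h(2) h(3)] e(3) fm_zer o by simp
  have c4: "Cmp G (fm p2) (fm i1) = Zer G (fo a) (fo b)" using fm_comp[OF h(1) h(4)] e(4) fm_zer o by simp
  have c5: "Add G (Cmp G (fm i1) (fm p1)) (Cmp G (fm i2) (fm p2)) = Idt G (fo s)"
  proof -
    have "fm (Add F (Cmp F i1 p1) (Cmp F i2 p2)) = Add G (fm (Cmp F i1 p1)) (fm (Cmp F i2 p2))"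
      using fm_add F.comp_hom h by blast
    then show ?thesis using e(5) fm_id o fm_comp[OF h(3) h(1)] fm_comp[OF h(4) h(2)] by simp
  qed
  show ?thesis unfolding is_biproduct_def
    using fm_hom[OF h(1)] fm_hom[OF h(2)] fm_hom[OF h(3)] fm_hom[OF h(4)] c1 c2 c3 c4 c5 by blast
qed
end

theorem lemma0p1:
  fixes F :: "('o,'m,'x) addcat_scheme" and G :: "('p,'n,'y) addcat_scheme"
    and EF :: "('m \<times> 'm) set" and EG :: "('n \<times> 'n) set"
    and fo :: "'o \<Rightarrow> 'p" and fm :: "'m \<Rightarrow> 'n"
  assumes "exact_category F EF" and "exact_category G EG"
    and "exact_functor F EF G EG fo fm"
  shows "(cond_star' F EF G EG fo fm \<and> cond_i' F EF G EG fo fm \<and> cond_ii' F EF G EG fo fm \<longrightarrow>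
           (\<forall>X \<in> Obj F. \<forall>T t. t \<in> hom G T (fo X) \<and> adm_epi G EG t \<longrightarrow>
              (\<exists>Z z s. z \<in> hom F Z X \<and> adm_epi F EF z \<and> s \<in> hom G (fo Z) T \<and>
                       adm_epi G EG s \<and> Cmp G t s = fm z)))
       \<and> (reflects_adm_epi F EF G EG fo fm \<and> cond_star' F EF G EG fo fm \<and>
            cond_ii' F EF G EG fo fm \<longrightarrow> cond_i' F EF G EG fo fm)"
proof -
  interpret exfun F EF G EG fo fm
    using assms unfolding exfun_def exfun_axioms_def exc_def by blast
  have common: "\<exists>U' h \<sigma>. h \<in> hom F U' X \<and> \<sigma> \<in> hom G (fo U') T \<and> adm_epi G EG \<sigma> \<and>
                   Cmp G t \<sigma> = fm h"
    if S: "cond_star' F EF G EG fo fm" and I2: "cond_ii' F EF G EG fo fm"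
      and X: "X \<in> Obj F" and t: "t \<in> hom G T (fo X)" and te: "adm_epi G EG t" for X T t
  proof -
    have T: "T \<in> Obj G" using G.hom_obj t by blast
    obtain U e where U: "U \<in> Obj F" and e: "e \<in> hom G (fo U) T" and ee: "adm_epi G EG e"
      using S T unfolding cond_star'_def by blast
    have tep: "Cmp G t e \<in> hom G (fo U) (fo X)" using e t by blast
    obtain U' p h where p: "p \<in> hom F U' U" and pe: "adm_epi F EF p" and h: "h \<in> hom F U' X"
      and eq: "Cmp G (Cmp G t e) (fm p) = fm h"
      using I2 U X tep unfolding cond_ii'_def by blast
    have fp: "fm p \<in> hom G (fo U') (fo U)" using fm_hom[OF p] .
    have \<sigma>: "Cmp G e (fm p) \<in> hom G (fo U') T" using fp e by blast
    have \<sigma>e: "adm_epi G EG (Cmp G e (fm p))" using G.comp_epi[OF fp e fm_epi[OF pe] ee] .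
    have "Cmp G t (Cmp G e (fm p)) = fm h" using eq G.assoc[OF fp e t] by simp
    then show ?thesis using h \<sigma> \<sigma>e by blast
  qed
  show ?thesis
  proof (intro conjI impI)
    assume A: "cond_star' F EF G EG fo fm \<and> cond_i' F EF G EG fo fm \<and> cond_ii' F EF G EG fo fm"
    show "\<forall>X \<in> Obj F. \<forall>T t. t \<in> hom G T (fo X) \<and> adm_epi G EG t \<longrightarrow>
              (\<exists>Z z s. z \<in> hom F Z X \<and> adm_epi F EF z \<and> s \<in> hom G (fo Z) T \<and>
                       adm_epi G EG s \<and> Cmp G t s = fm z)"
    proof (intro ballI allI impI)
      fix X T t assume X: "X \<in> Obj F" and tt: "t \<in> hom G T (fo X) \<and> adm_epi G EG t"
      then have t: "t \<in> hom G T (fo X)" and te: "adm_epi G EG t" by auto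
      obtain Z0 z0 s0 where z0: "z0 \<in> hom F Z0 X" and z0e: "adm_epi F EF z0"
        and s0: "s0 \<in> hom G (fo Z0) T" and eq0: "Cmp G t s0 = fm z0"
        using A X t te unfolding cond_i'_def by blast
      obtain U' h \<sigma> where h: "h \<in> hom F U' X" and \<sigma>: "\<sigma> \<in> hom G (fo U') T"
        and \<sigma>e: "adm_epi G EG \<sigma>" and eq1: "Cmp G t \<sigma> = fm h"
        using common A X t te by blast
      have Z0: "Z0 \<in> Obj F" and U': "U' \<in> Obj F" using F.hom_obj z0 h by auto
      obtain s i1 i2 p1 p2 where B: "is_biproduct F Z0 U' s i1 i2 p1 p2"
        using F.bip_ex[OF Z0 U'] by blast
      have hb: "p1 \<in> hom F s Z0" "p2 \<in> hom F s U'" using F.bip_homs[OF B] by auto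
      define z where "z = Add F (Cmp F z0 p1) (Cmp F h p2)"
      have zh: "z \<in> hom F s X" unfolding z_def using hb z0 h by blast
      have ze: "adm_epi F EF z" unfolding z_def using F.L1[OF B z0 z0e h] .
      have BG: "is_biproduct G (fo Z0) (fo U') (fo s) (fm i1) (fm i2) (fm p1) (fm p2)"
        using fm_bip[OF B] .
      have fp1: "fm p1 \<in> hom G (fo s) (fo Z0)" and fp2: "fm p2 \<in> hom G (fo s) (fo U')"
        using fm_hom hb by auto
      define s' where "s' = Add G (Cmp G s0 (fm p1)) (Cmp G \<sigma> (fm p2))"
      have s'h: "s' \<in> hom G (fo s) T" unfolding s'_def using fp1 fp2 s0 \<sigma> by blast
      have s'e: "adm_epi G EG s'" unfolding s'_def using G.L1'[OF BG s0 \<sigma> \<sigma>e] .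
      have "Cmp G t s' = Add G (Cmp G t (Cmp G s0 (fm p1))) (Cmp G t (Cmp G \<sigma> (fm p2)))"
        unfolding s'_def using G.distl[OF G.comp_hom[OF fp1 s0] G.comp_hom[OF fp2 \<sigma>] t] .
      also have "\<dots> = Add G (Cmp G (fm z0) (fm p1)) (Cmp G (fm h) (fm p2))"
        using G.assoc[OF fp1 s0 t] G.assoc[OF fp2 \<sigma> t] eq0 eq1 by simp
      also have "\<dots> = Add G (fm (Cmp F z0 p1)) (fm (Cmp F h p2))"
        using fm_comp[OF hb(1) z0] fm_comp[OF hb(2) h] by simp
      also have "\<dots> = fm z" unfolding z_def
        using fm_add[OF F.comp_hom[OF hb(1) z0] F.comp_hom[OF hb(2) h]] by simp
      finally have "Cmp G t s' = fm z" .
      then show "\<exists>Z z s. z \<in> hom F Z X \<and> adm_epi F EF z \<and> s \<in> hom G (fo Z) T \<and>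
                       adm_epi G EG s \<and> Cmp G t s = fm z"
        using zh ze s'h s'e by blast
    qed
  next
    assume A: "reflects_adm_epi F EF G EG fo fm \<and> cond_star' F EF G EG fo fm \<and>
            cond_ii' F EF G EG fo fm"
    show "cond_i' F EF G EG fo fm" unfolding cond_i'_def
    proof (intro ballI allI impI)
      fix X T t assume X: "X \<in> Obj F" and tt: "t \<in> hom G T (fo X) \<and> adm_epi G EG t"
      then have t: "t \<in> hom G T (fo X)" and te: "adm_epi G EG t" by auto
      obtain U' h \<sigma> where h: "h \<in> hom F U' X" and \<sigma>: "\<sigma> \<in> hom G (fo U') T"
        and \<sigma>e: "adm_epi G EG \<sigma>" and eq1: "Cmp G t \<sigma> = fm h"
        using common A X t te by blast
      have "adm_epi G EG (fm h)" using G.comp_epi[OF \<sigma> t \<sigma>e te] eq1 by simp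
      moreover have "h \<in> Arr F" using h F.hom_iff by simp
      ultimately have "adm_epi F EF h" using A unfolding reflects_adm_epi_def by blast
      then show "\<exists>Z z s. z \<in> hom F Z X \<and> adm_epi F EF z \<and> s \<in> hom G (fo Z) T \<and>
                 Cmp G t s = fm z" using h \<sigma> eq1 by blast
    qed
  qed
qed

end
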